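(* Let $k\ge1$, $D_k=3k^2+3k+1$, and let $c\in P_k$. Then the set $c+V(T_{D_k})=\{c+a\alpha_1+b\alpha_2 : 0\le b\le a\le D_k\}$ contains exactly $\dfrac{D_k+5}{2}$ points of $P_k$.
   Context: Let $\alpha_1=(1,0)$ and $\alpha_2=(-\tfrac12,\tfrac{\sqrt3}{2})$. The triangular lattice $T_\infty$ is the infinite graph with vertex set $\{a\alpha_1+b\alpha_2 : a,b\in\mathbb Z\}$, two vertices being adjacent iff their Euclidean distance is $1$. For $d\ge0$, $T_d$ is the subgraph of $T_\infty$ induced by the vertices $a\alpha_1+b\alpha_2$ with $0\le b\le a\le d$. For $k\ge 1$, let $D_k=3k^2+3k+1$ and let $P_k$ (the pattern $P_{k+1,1}$) be the sublattice $\{x\,u+y\,v : x,y\in\mathbb Z\}$ of the vertex set of $T_\infty$, where $u=(2k+1)\alpha_1+k\alpha_2$ and $v=(k+1)\alpha_1+(2k+1)\alpha_2$ ($v$ is $u$ rotated by $60^\circ$). Consecutive points of $P_k$ along any of the three lattice directions are at distance $D_k$; in particular if $c\in P_k$ then the three corners $c$, $c+D_k\alpha_1$, $c+D_k(\alpha_1+\alpha_2)$ of $c+V(T_{D_k})$ lie in $P_k$. *)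

theory Defs
  imports Complex_Main
begin

definition alpha1 :: complex where
  "alpha1 = 1"

definition alpha2 :: complex where
  "alpha2 = Complex (-1/2) (sqrt 3 / 2)"

definition Dk :: "nat \<Rightarrow> nat" where
  "Dk k = 3 * k^2 + 3 * k + 1"

definition u_vec :: "nat \<Rightarrow> complex" where
  "u_vec k = of_nat (2*k+1) * alpha1 + of_nat k * alpha2"

definition v_vec :: "nat \<Rightarrow> complex" where
  "v_vec k = of_nat (k+1) * alpha1 + of_nat (2*k+1) * alpha2"

definition Pk :: "nat \<Rightarrow> complex set" where
  "Pk k = {of_int x * u_vec k + of_int y * v_vec k | x y :: int. True}"

definition VT :: "nat \<Rightarrow> complex set" where
  "VT d = {of_int a * alpha1 + of_int b * alpha2 | a b :: int. 0 \<le> b \<and> b \<le> a \<and> a \<le> int d}"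

end

theory Submission imports Defs begin

definition fpt :: "int \<times> int \<Rightarrow> complex" where
  "fpt p = of_int (fst p) * alpha1 + of_int (snd p) * alpha2"

lemma fpt_inj: "inj fpt"
proof (rule injI)
  fix p q assume h: "fpt p = fpt q"
  obtain a b where p: "p=(a,b)" by (cases p)
  obtain c d where q: "q=(c,d)" by (cases q)
  have "Im (fpt p) = Im (fpt q)" using h by simp
  hence "b = d" by (simp add: p q fpt_def alpha1_def alpha2_def)
  moreover have "Re (fpt p) = Re (fpt q)" using h by simp
  ultimately have "a = c" by (simp add: p q fpt_def alpha1_def alpha2_def)
  thus "p = q" using \<open>b=d\<close> p q by simp
qed

lemma fpt_add: "fpt (a,b) + fpt (c,d) = fpt (a+c, b+d)"
  by (simp add: fpt_def algebra_simps)

lemma cancel_dvd: "(d::int) dvd x*a \<Longrightarrow> s*x = 1 + t*d \<Longrightarrow> d dvd a"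
proof -
  assume h: "d dvd x*a" and e: "s*x = 1 + t*d"
  have "a = s*(x*a) - t*a*d" using e by (simp add: algebra_simps)
  thus ?thesis using h by (metis dvd_diff dvd_mult dvd_triv_right)
qed

definition cnd :: "int \<Rightarrow> int \<Rightarrow> int \<Rightarrow> bool" where
  "cnd K a b \<longleftrightarrow> (3*K^2+3*K+1) dvd ((2*K+1)*b - K*a)"

lemma Pk_eq: "Pk k = fpt ` {p. cnd (int k) (fst p) (snd p)}"
proof -
  define K where "K = int k"
  define D where "D = 3*K^2+3*K+1"
  have Dpos: "D > 0" unfolding D_def K_def by (simp add: add_pos_nonneg)
  have key: "of_int x * u_vec k + of_int y * v_vec k = fpt (x*(2*K+1)+y*(K+1), x*K+y*(2*K+1))" for x y
    unfolding u_vec_def v_vec_def fpt_def K_def by (simp add: algebra_simps)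
  show ?thesis
  proof (rule set_eqI, rule iffI)
    fix z assume "z \<in> Pk k"
    then obtain x y where z: "z = of_int x * u_vec k + of_int y * v_vec k" unfolding Pk_def by blast
    have "(2*K+1)*(x*K+y*(2*K+1)) - K*(x*(2*K+1)+y*(K+1)) = D*y"
      unfolding D_def by (simp add: algebra_simps power2_eq_square)
    hence "cnd K (x*(2*K+1)+y*(K+1)) (x*K+y*(2*K+1))" unfolding cnd_def D_def[symmetric] by simp
    thus "z \<in> fpt ` {p. cnd (int k) (fst p) (snd p)}" using z key K_def by force
  next
    fix z assume "z \<in> fpt ` {p. cnd (int k) (fst p) (snd p)}"
    then obtain a b where z: "z = fpt (a,b)" and c: "cnd K a b" using K_def by auto
    obtain y where hy: "(2*K+1)*b - K*a = D*y" using c unfolding cnd_def D_def by blast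
    have "(2*K+1)*((2*K+1)*a - (K+1)*b) = D*a - (K+1)*((2*K+1)*b - K*a)"
      unfolding D_def by (simp add: algebra_simps power2_eq_square)
    hence "(2*K+1)*((2*K+1)*a - (K+1)*b) = D*(a - (K+1)*y)" unfolding hy by (simp add: algebra_simps)
    hence "D dvd (2*K+1)*((2*K+1)*a - (K+1)*b)" by simp
    moreover have "(-3*(2*K+1))*(2*K+1) = 1 + (-4)*D" unfolding D_def by (simp add: algebra_simps power2_eq_square)
    ultimately have "D dvd (2*K+1)*a - (K+1)*b" by (rule cancel_dvd)
    then obtain x where hx: "(2*K+1)*a - (K+1)*b = D*x" by blast
    have ea: "D*a = D*(x*(2*K+1)+y*(K+1))"
    proof -
      have "D*(x*(2*K+1)+y*(K+1)) = (2*K+1)*(D*x) + (K+1)*(D*y)" by (simp add: algebra_simps)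
      also have "\<dots> = (2*K+1)*((2*K+1)*a - (K+1)*b) + (K+1)*((2*K+1)*b - K*a)" by (simp only: hx hy)
      also have "\<dots> = D*a" unfolding D_def by (simp add: algebra_simps power2_eq_square)
      finally show ?thesis by (rule sym)
    qed
    have eb: "D*b = D*(x*K+y*(2*K+1))"
    proof -
      have "D*(x*K+y*(2*K+1)) = K*(D*x) + (2*K+1)*(D*y)" by (simp add: algebra_simps)
      also have "\<dots> = K*((2*K+1)*a - (K+1)*b) + (2*K+1)*((2*K+1)*b - K*a)" by (simp only: hx hy)
      also have "\<dots> = D*b" unfolding D_def by (simp add: algebra_simps power2_eq_square)
      finally show ?thesis by (rule sym)
    qed
    have "a = x*(2*K+1)+y*(K+1)" "b = x*K+y*(2*K+1)" using ea eb Dpos by simp_all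
    hence "z = of_int x * u_vec k + of_int y * v_vec k" using z key by simp
    thus "z \<in> Pk k" unfolding Pk_def by blast
  qed
qed


lemma cnd_iff:
  "cnd K a b \<longleftrightarrow> (3*K^2+3*K+1) dvd (b + (3*K*(2*K+1))*a)"
proof -
  define D where "D = 3*K^2+3*K+1"
  have e1: "b + (3*K*(2*K+1))*a = (-3*(2*K+1))*((2*K+1)*b - K*a) + D*(4*b)"
    unfolding D_def by (simp add: algebra_simps power2_eq_square)
  have e2: "(2*K+1)*b - K*a = (2*K+1)*(b + (3*K*(2*K+1))*a) - D*(4*K*a)"
    unfolding D_def by (simp add: algebra_simps power2_eq_square)
  show ?thesis unfolding cnd_def D_def[symmetric]
  proof
    assume "D dvd (2*K+1)*b - K*a" show "D dvd b + (3*K*(2*K+1))*a" unfolding e1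
    proof (rule dvd_add)
      show "D dvd (-3*(2*K+1))*((2*K+1)*b - K*a)" using \<open>D dvd (2*K+1)*b - K*a\<close> by (rule dvd_mult)
    qed simp
  next
    assume "D dvd b + (3*K*(2*K+1))*a" show "D dvd (2*K+1)*b - K*a" unfolding e2
    proof (rule dvd_diff)
      show "D dvd (2*K+1)*(b + (3*K*(2*K+1))*a)" using \<open>D dvd b + (3*K*(2*K+1))*a\<close> by (rule dvd_mult)
    qed simp
  qed
qed

lemma cnd_shift: "cnd K c1 c2 \<Longrightarrow> cnd K (c1+a) (c2+b) \<longleftrightarrow> cnd K a b"
proof -
  assume h: "cnd K c1 c2"
  have e: "(2*K+1)*(c2+b) - K*(c1+a) = ((2*K+1)*c2 - K*c1) + ((2*K+1)*b - K*a)"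
    by (simp add: algebra_simps)
  show ?thesis using h unfolding cnd_def e
    by (rule dvd_add_right_iff)
qed

lemma dvdK: "(3*K^2+3*K+1) dvd K*a \<Longrightarrow> (3*K^2+3*K+1) dvd (a::int)"
  by (erule cancel_dvd[where s="-(3*K+3)" and t="-1"]) (simp add: algebra_simps power2_eq_square)
lemma dvdK1: "(3*K^2+3*K+1) dvd (K+1)*a \<Longrightarrow> (3*K^2+3*K+1) dvd (a::int)"
  by (erule cancel_dvd[where s="-3*K" and t="-1"]) (simp add: algebra_simps power2_eq_square)
lemma dvd2K1: "(3*K^2+3*K+1) dvd (2*K+1)*a \<Longrightarrow> (3*K^2+3*K+1) dvd (a::int)"
  by (erule cancel_dvd[where s="-3*(2*K+1)" and t="-4"]) (simp add: algebra_simps power2_eq_square)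
lemma dvd3: "(3*K^2+3*K+1) dvd 3*a \<Longrightarrow> (3*K^2+3*K+1) dvd (a::int)"
  by (erule cancel_dvd[where s="-(K^2+K)" and t="-1"]) (simp add: algebra_simps power2_eq_square)
lemma dvdmu: "(3*K^2+3*K+1) dvd (3*K*(2*K+1))*a \<Longrightarrow> (3*K^2+3*K+1) dvd (a::int)"
  by (metis dvd3 dvdK dvd2K1 mult.assoc)

lemma dvd_range: "(D::int) > 0 \<Longrightarrow> D dvd a \<Longrightarrow> 0 \<le> a \<Longrightarrow> a \<le> D \<Longrightarrow> a = 0 \<or> a = D"
proof -
  assume "D > 0" "D dvd a" "0 \<le> a" "a \<le> D"
  then obtain m where m: "a = D*m" by blast
  have "0 \<le> m" using \<open>D>0\<close> \<open>0\<le>a\<close> m by (simp add: zero_le_mult_iff)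
  moreover have "m \<le> 1" using \<open>D>0\<close> \<open>a\<le>D\<close> m by (metis mult.right_neutral mult_le_cancel_left_pos)
  ultimately have "m = 0 \<or> m = 1" by auto
  thus ?thesis using m by auto
qed

lemma count_main:
  fixes K :: int assumes K0: "K \<ge> 0"
  defines "D \<equiv> 3*K^2+3*K+1"
  shows "2 * int (card {(a,b). 0 \<le> b \<and> b \<le> a \<and> a \<le> D \<and> cnd K a b}) = D + 5"
proof -
  define mu where "mu = 3*K*(2*K+1)"
  define r where "r a = (-(mu*a)) mod D" for a
  have Dpos: "D > 0" unfolding D_def using K0 by (simp add: add_pos_nonneg)
  have nd: "\<not> D dvd a" if "0 < a" "a < D" for a
    using dvd_range[OF Dpos _ _] that by fastforce
  have cndI: "cnd K a b \<longleftrightarrow> D dvd b + mu*a" for a b unfolding cnd_iff D_def mu_def ..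
  have rd: "D dvd (-(mu*a)) - r a" for a unfolding r_def by (rule dvd_minus_mod)
  have r_ge: "0 \<le> r a" "r a < D" for a unfolding r_def using Dpos by auto
  have r_nz: "r a \<noteq> 0" if "0<a" "a<D" for a
  proof
    assume "r a = 0"
    hence "D dvd mu*a" using rd[of a] by (simp add: dvd_minus_iff)
    hence "D dvd a" unfolding D_def mu_def by (rule dvdmu)
    thus False using nd that by blast
  qed
  have r_na: "r a \<noteq> a" if "0<a" "a<D" for a
  proof
    assume "r a = a"
    hence "D dvd a + mu*a" using rd[of a] by (metis dvd_minus_iff minus_diff_eq diff_minus_eq_add add.commute)
    hence "cnd K a a" using cndI by blast
    hence "D dvd (K+1)*a" unfolding cnd_def D_def by (simp add: algebra_simps)
    hence "D dvd a" unfolding D_def by (rule dvdK1)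
    thus False using nd that by blast
  qed
  have r_refl: "r (D-a) = D - r a" if "0<a" "a<D" for a
  proof -
    have "r (D-a) = (mu*a + D*(-mu)) mod D" unfolding r_def by (simp add: algebra_simps)
    also have "\<dots> = (mu*a) mod D" by (rule mod_mult_self2)
    finally have 1: "r (D-a) = (mu*a) mod D" .
    have "(mu*a) mod D \<noteq> 0"
    proof
      assume "(mu*a) mod D = 0"
      hence "D dvd mu*a" by auto
      hence "D dvd a" unfolding D_def mu_def by (rule dvdmu)
      thus False using nd that by blast
    qed
    hence "r a = D - (mu*a) mod D" unfolding r_def by (simp add: zmod_zminus1_eq_if)
    thus ?thesis using 1 by simp
  qed
  define A where "A = {a. 0<a \<and> a<D \<and> r a < a}"
  define B where "B = {a. 0<a \<and> a<D \<and> a < r a}"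
  have finA: "finite A" unfolding A_def by (rule finite_subset[of _ "{0<..<D}"]) auto
  have finB: "finite B" unfolding B_def by (rule finite_subset[of _ "{0<..<D}"]) auto
  have AB: "A \<union> B = {0<..<D}" unfolding A_def B_def using r_na by fastforce
  have ABd: "A \<inter> B = {}" unfolding A_def B_def by auto
  have "card A + card B = card {0<..<D}" using card_Un_disjoint[OF finA finB ABd] AB by simp
  hence cAB: "card A + card B = nat (D - 1)" by simp
  have Bim: "B = (\<lambda>a. D - a) ` A"
  proof (rule set_eqI, rule iffI)
    fix x assume "x \<in> B"
    hence x: "0<x" "x<D" "x < r x" unfolding B_def by auto
    have "D - x \<in> A" unfolding A_def using x r_refl[of x] by auto
    thus "x \<in> (\<lambda>a. D - a) ` A" by force
  next
    fix x assume "x \<in> (\<lambda>a. D - a) ` A"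
    then obtain a where a: "a \<in> A" "x = D - a" by blast
    thus "x \<in> B" unfolding A_def B_def using r_refl[of a] by auto
  qed
  have "card B = card A" unfolding Bim by (rule card_image) (simp add: inj_on_def)
  hence cA: "2 * int (card A) = D - 1" using cAB Dpos by linarith
  define I where "I = {(a,b). 0 < b \<and> b < a \<and> a < D \<and> cnd K a b}"
  have Iim: "I = (\<lambda>a. (a, r a)) ` A"
  proof (rule set_eqI, rule iffI)
    fix p assume "p \<in> I"
    then obtain a b where p: "p = (a,b)" "0 < b" "b < a" "a < D" "cnd K a b" unfolding I_def by blast
    have "D dvd b - (-(mu*a))" using p cndI by simp
    hence "b mod D = (-(mu*a)) mod D" by (simp add: mod_eq_dvd_iff)
    hence "b = r a" unfolding r_def using p by simp
    thus "p \<in> (\<lambda>a. (a, r a)) ` A" unfolding A_def using p by auto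
  next
    fix p assume "p \<in> (\<lambda>a. (a, r a)) ` A"
    then obtain a where a: "p = (a, r a)" "0<a" "a<D" "r a < a" unfolding A_def by blast
    have "D dvd r a + mu*a" using rd[of a] by (metis dvd_minus_iff minus_diff_eq diff_minus_eq_add add.commute)
    hence "cnd K a (r a)" using cndI by blast
    thus "p \<in> I" unfolding I_def using a r_nz[of a] r_ge[of a] by auto
  qed
  have cI: "card I = card A" unfolding Iim by (rule card_image) (simp add: inj_on_def)
  have finI: "finite I" unfolding Iim using finA by simp
  define C where "C = {(0::int,0::int), (D,0), (D,D)}"
  have cC: "card C = 3" unfolding C_def using Dpos by simp
  have CI: "C \<inter> I = {}" unfolding C_def I_def by auto
  have Seq: "{(a,b). 0 \<le> b \<and> b \<le> a \<and> a \<le> D \<and> cnd K a b} = C \<union> I"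
  proof (rule set_eqI, rule iffI)
    fix p assume "p \<in> {(a,b). 0 \<le> b \<and> b \<le> a \<and> a \<le> D \<and> cnd K a b}"
    then obtain a b where p: "p = (a,b)" "0 \<le> b" "b \<le> a" "a \<le> D" "cnd K a b" by blast
    have c: "D dvd (2*K+1)*b - K*a" using p(5) unfolding cnd_def D_def .
    show "p \<in> C \<union> I"
    proof (cases "b = 0")
      case True
      hence "D dvd K*a" using c by (simp add: dvd_minus_iff)
      hence "D dvd a" unfolding D_def by (rule dvdK)
      hence "a = 0 \<or> a = D" using dvd_range[OF Dpos] p by auto
      thus ?thesis using True p unfolding C_def by auto
    next
      case b0: False
      show ?thesis
      proof (cases "a = D")
        case True
        have c': "D dvd (2*K+1)*b - D*K" using c True by (simp add: mult.commute)
        have "D dvd ((2*K+1)*b - D*K) + D*K" using c' by (rule dvd_add) simp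
        hence "D dvd (2*K+1)*b" by simp
        hence "D dvd b" unfolding D_def by (rule dvd2K1)
        hence "b = 0 \<or> b = D" using dvd_range[OF Dpos] p True by auto
        thus ?thesis using True b0 p unfolding C_def by auto
      next
        case aD: False
        show ?thesis
        proof (cases "a = b")
          case True
          hence "D dvd (K+1)*a" using c by (simp add: algebra_simps)
          hence "D dvd a" unfolding D_def by (rule dvdK1)
          hence "a = 0 \<or> a = D" using dvd_range[OF Dpos] p by auto
          thus ?thesis using True b0 aD by auto
        next
          case False
          thus ?thesis using b0 aD p unfolding I_def by auto
        qed
      qed
    qed
  next
    fix p assume "p \<in> C \<union> I"
    moreover have "cnd K 0 0" unfolding cnd_def by simp
    moreover have "(2*K+1)*0 - K*D = D*(-K)" "(2*K+1)*D - K*D = D*(K+1)" by (simp_all add: algebra_simps)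
    hence "cnd K D 0" "cnd K D D" unfolding cnd_def D_def[symmetric] by (metis dvd_triv_left)+
    ultimately show "p \<in> {(a,b). 0 \<le> b \<and> b \<le> a \<and> a \<le> D \<and> cnd K a b}"
      unfolding C_def I_def using Dpos by auto
  qed
  have "card (C \<union> I) = 3 + card A" using card_Un_disjoint[of C I] finI CI cC cI unfolding C_def by simp
  thus ?thesis unfolding Seq using cA by simp
qed

lemma VT_eq: "VT d = fpt ` {(a,b). 0 \<le> b \<and> b \<le> a \<and> a \<le> int d}"
  unfolding VT_def fpt_def image_def by auto

theorem lemma1:
  fixes k :: nat and c :: complex
  assumes "k \<ge> 1" and "c \<in> Pk k"
  shows "real (card ((\<lambda>p. c + p) ` VT (Dk k) \<inter> Pk k)) = (real (Dk k) + 5) / 2"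
proof -
  define K where "K = int k"
  define D where "D = 3*K^2+3*K+1"
  have DD: "int (Dk k) = D" unfolding D_def K_def Dk_def by simp
  define S where "S = {(a,b). 0 \<le> b \<and> b \<le> a \<and> a \<le> D \<and> cnd K a b}"
  have cS: "2 * int (card S) = D + 5" unfolding S_def D_def by (rule count_main) (simp add: K_def)
  obtain c1 c2 where c: "c = fpt (c1,c2)" "cnd K c1 c2"
    using assms(2) unfolding Pk_eq K_def by auto
  define g where "g q = fpt (c1 + fst q, c2 + snd q)" for q
  have injg: "inj g"
  proof (rule injI)
    fix p q assume "g p = g q"
    hence "(c1 + fst p, c2 + snd p) = (c1 + fst q, c2 + snd q)" unfolding g_def using fpt_inj
      by (meson injD)
    thus "p = q" by (simp add: prod_eq_iff)
  qed
  have eq: "(\<lambda>p. c + p) ` VT (Dk k) \<inter> Pk k = g ` S"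
  proof (rule set_eqI, rule iffI)
    fix z assume "z \<in> (\<lambda>p. c + p) ` VT (Dk k) \<inter> Pk k"
    then obtain a b p1 p2 where z: "z = c + fpt (a,b)" "0 \<le> b" "b \<le> a" "a \<le> D"
       "z = fpt (p1,p2)" "cnd K p1 p2"
      unfolding VT_eq Pk_eq DD K_def[symmetric] by (auto; blast)
    have "fpt (p1,p2) = fpt (c1+a, c2+b)" using z c fpt_add by simp
    hence "(p1,p2) = (c1+a,c2+b)" using fpt_inj by (meson injD)
    hence "cnd K a b" using z(6) cnd_shift[OF c(2)] by simp
    hence "(a,b) \<in> S" unfolding S_def using z by auto
    moreover have "z = g (a,b)" unfolding g_def using z c fpt_add by simp
    ultimately show "z \<in> g ` S" by blast
  next
    fix z assume "z \<in> g ` S"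
    then obtain a b where z: "z = g (a,b)" "0 \<le> b" "b \<le> a" "a \<le> D" "cnd K a b"
      unfolding S_def by auto
    have "z = c + fpt (a,b)" unfolding z g_def c fpt_add by simp
    moreover have "fpt (a,b) \<in> VT (Dk k)" unfolding VT_eq DD using z by auto
    ultimately have "z \<in> (\<lambda>p. c + p) ` VT (Dk k)" by blast
    moreover have "cnd K (c1+a) (c2+b)" using z(5) cnd_shift[OF c(2)] by simp
    hence "z \<in> Pk k" unfolding Pk_eq z g_def K_def[symmetric] by force
    ultimately show "z \<in> (\<lambda>p. c + p) ` VT (Dk k) \<inter> Pk k" by blast
  qed
  have "card ((\<lambda>p. c + p) ` VT (Dk k) \<inter> Pk k) = card S"
    unfolding eq by (rule card_image) (meson injg inj_on_subset subset_UNIV)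
  moreover have "real_of_int (2 * int (card S)) = real_of_int (D + 5)" using cS by (rule arg_cong)
  moreover have "real (Dk k) = real_of_int D" using DD by (metis of_int_of_nat_eq)
  ultimately show ?thesis by simp
qed

end
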